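(* Let $\mathcal V\subseteq B(H)$ be an operator system, let $p\in\mathcal V$ be a projection in $B(H)$, and let $q=I-p$. If $a,b,c\in\mathcal V$ with $a=a^*$ and $b=b^*$, then $pap+pcq+qc^*p+qbq\ge0$ in $B(H)$ if and only if $\begin{pmatrix}a&c\\c^*&b\end{pmatrix}\in C(p\oplus q)$.
   Context: $C(p\oplus q)=\{y\in M_2(\mathcal V): y=y^*,\ (p\oplus q)\,y\,(p\oplus q)\ge0 \text{ in } B(H^2)\}$ where $p\oplus q=\mathrm{diag}(p,q)$. *)

theory Defs
  imports Complex_Main
begin

class chilbert = ab_group_add +
  fixes scaleC :: "complex \<Rightarrow> 'a \<Rightarrow> 'a" (infixr "*\<^sub>C" 75)
    and cinner :: "'a \<Rightarrow> 'a \<Rightarrow> complex"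
  assumes scaleC_add_right: "a *\<^sub>C (x + y) = a *\<^sub>C x + a *\<^sub>C y"
    and scaleC_add_left: "(a + b) *\<^sub>C x = a *\<^sub>C x + b *\<^sub>C x"
    and scaleC_scaleC: "a *\<^sub>C (b *\<^sub>C x) = (a * b) *\<^sub>C x"
    and scaleC_one: "1 *\<^sub>C x = x"
    and cinner_sym: "cinner x y = cnj (cinner y x)"
    and cinner_add_left: "cinner (x + y) z = cinner x z + cinner y z"
    and cinner_scaleC_left: "cinner (a *\<^sub>C x) y = a * cinner x y"
    and cinner_self_nonneg: "Im (cinner x x) = 0 \<and> 0 \<le> Re (cinner x x)"
    and cinner_self_eq_zero: "cinner x x = 0 \<Longrightarrow> x = 0"
    and cinner_complete:
      "(\<forall>e>0. \<exists>N. \<forall>m\<ge>(N::nat). \<forall>n\<ge>N. sqrt (Re (cinner (X m - X n) (X m - X n))) < e)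
        \<Longrightarrow> (\<exists>L. \<forall>e>0. \<exists>N::nat. \<forall>n\<ge>N. sqrt (Re (cinner (X n - L) (X n - L))) < e)"

definition cnorm :: "'h::chilbert \<Rightarrow> real" where
  "cnorm x = sqrt (Re (cinner x x))"

definition clinear :: "('h::chilbert \<Rightarrow> 'h) \<Rightarrow> bool" where
  "clinear T \<longleftrightarrow> (\<forall>x y. T (x + y) = T x + T y) \<and> (\<forall>a x. T (a *\<^sub>C x) = a *\<^sub>C T x)"

definition Bop :: "('h::chilbert \<Rightarrow> 'h) set" where
  "Bop = {T. clinear T \<and> (\<exists>K. \<forall>x. cnorm (T x) \<le> K * cnorm x)}"

definition is_adjoint :: "('h::chilbert \<Rightarrow> 'h) \<Rightarrow> ('h \<Rightarrow> 'h) \<Rightarrow> bool" where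
  "is_adjoint T S \<longleftrightarrow> (\<forall>x y. cinner (T x) y = cinner x (S y))"

definition adj :: "('h::chilbert \<Rightarrow> 'h) \<Rightarrow> ('h \<Rightarrow> 'h)" where
  "adj T = (THE S. is_adjoint T S)"

definition selfadj :: "('h::chilbert \<Rightarrow> 'h) \<Rightarrow> bool" where
  "selfadj T \<longleftrightarrow> is_adjoint T T"

definition pos_op :: "('h::chilbert \<Rightarrow> 'h) \<Rightarrow> bool" where
  "pos_op T \<longleftrightarrow> T \<in> Bop \<and> (\<forall>x. Im (cinner (T x) x) = 0 \<and> 0 \<le> Re (cinner (T x) x))"

definition projection :: "('h::chilbert \<Rightarrow> 'h) \<Rightarrow> bool" where
  "projection p \<longleftrightarrow> p \<in> Bop \<and> (\<forall>x. p (p x) = p x) \<and> selfadj p"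

definition operator_system :: "('h::chilbert \<Rightarrow> 'h) set \<Rightarrow> bool" where
  "operator_system V \<longleftrightarrow> V \<subseteq> Bop \<and> (\<lambda>x. 0) \<in> V \<and> id \<in> V
     \<and> (\<forall>S\<in>V. \<forall>T\<in>V. (\<lambda>x. S x + T x) \<in> V)
     \<and> (\<forall>a. \<forall>T\<in>V. (\<lambda>x. a *\<^sub>C T x) \<in> V)
     \<and> (\<forall>T\<in>V. \<exists>S\<in>V. is_adjoint T S)"

definition cinner2 :: "'h::chilbert \<times> 'h \<Rightarrow> 'h \<times> 'h \<Rightarrow> complex" where
  "cinner2 u v = cinner (fst u) (fst v) + cinner (snd u) (snd v)"

definition mat2 :: "('h::chilbert \<Rightarrow> 'h) \<Rightarrow> ('h \<Rightarrow> 'h) \<Rightarrow> ('h \<Rightarrow> 'h) \<Rightarrow> ('h \<Rightarrow> 'h)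
    \<Rightarrow> ('h \<times> 'h \<Rightarrow> 'h \<times> 'h)" where
  "mat2 y11 y12 y21 y22 = (\<lambda>(x, y). (y11 x + y12 y, y21 x + y22 y))"

definition M2 :: "('h::chilbert \<Rightarrow> 'h) set \<Rightarrow> ('h \<times> 'h \<Rightarrow> 'h \<times> 'h) set" where
  "M2 V = {mat2 y11 y12 y21 y22 | y11 y12 y21 y22. y11 \<in> V \<and> y12 \<in> V \<and> y21 \<in> V \<and> y22 \<in> V}"

definition selfadj2 :: "('h::chilbert \<times> 'h \<Rightarrow> 'h \<times> 'h) \<Rightarrow> bool" where
  "selfadj2 Y \<longleftrightarrow> (\<forall>u v. cinner2 (Y u) v = cinner2 u (Y v))"

definition pos_op2 :: "('h::chilbert \<times> 'h \<Rightarrow> 'h \<times> 'h) \<Rightarrow> bool" where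
  "pos_op2 Z \<longleftrightarrow> (\<forall>u. Im (cinner2 (Z u) u) = 0 \<and> 0 \<le> Re (cinner2 (Z u) u))"

definition diag2 :: "('h::chilbert \<Rightarrow> 'h) \<Rightarrow> ('h \<Rightarrow> 'h) \<Rightarrow> ('h \<times> 'h \<Rightarrow> 'h \<times> 'h)" where
  "diag2 p q = (\<lambda>(x, y). (p x, q y))"

definition Ccone :: "('h::chilbert \<Rightarrow> 'h) set \<Rightarrow> ('h \<Rightarrow> 'h) \<Rightarrow> ('h \<Rightarrow> 'h)
    \<Rightarrow> ('h \<times> 'h \<Rightarrow> 'h \<times> 'h) set" where
  "Ccone V p q = {Y. Y \<in> M2 V \<and> selfadj2 Y \<and> pos_op2 (diag2 p q \<circ> Y \<circ> diag2 p q)}"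

end

theory Submission imports Defs begin

lemma hcinner_zero_left[simp]: "cinner (0::'h::chilbert) y = 0"
  using cinner_add_left[of "0::'h" 0 y] by simp
lemma hcinner_minus_left: "cinner (- x::'h::chilbert) y = - cinner x y"
  proof -
  have "cinner x y + cinner (-x) y = 0" using cinner_add_left[of x "-x" y] by simp
  thus ?thesis by (metis minus_unique)
qed
lemma hcinner_diff_left: "cinner (x - z::'h::chilbert) y = cinner x y - cinner z y"
  using cinner_add_left[of x "-z" y] hcinner_minus_left[of z y] by simp
lemma hcinner_add_right: "cinner (x::'h::chilbert) (y + z) = cinner x y + cinner x z"
  by (metis cinner_sym cinner_add_left complex_cnj_add)
lemma hcinner_zero_right[simp]: "cinner (x::'h::chilbert) 0 = 0"
  by (metis cinner_sym hcinner_zero_left complex_cnj_zero)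
lemma hcinner_diff_right: "cinner (x::'h::chilbert) (y - z) = cinner x y - cinner x z"
  by (metis cinner_sym hcinner_diff_left complex_cnj_diff)
lemma hcinner_minus_right: "cinner (x::'h::chilbert) (- y) = - cinner x y"
  by (metis cinner_sym hcinner_minus_left complex_cnj_minus)
lemma hcinner_scaleC_right: "cinner (x::'h::chilbert) (a *\<^sub>C y) = cnj a * cinner x y"
  by (metis cinner_sym cinner_scaleC_left complex_cnj_mult)
lemma hscaleC_diff_right: "a *\<^sub>C (x - y) = a *\<^sub>C x - a *\<^sub>C (y::'h::chilbert)"
  using scaleC_add_right[of a "x - y" y] by (simp add: eq_diff_eq)

lemma hcinner_self_real: "cinner (x::'h::chilbert) x = complex_of_real (Re (cinner x x))"
  using cinner_self_nonneg[of x] by (simp add: complex_eq_iff)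

lemma hcs: "cmod (cinner (x::'h::chilbert) y) ^ 2 \<le> Re (cinner x x) * Re (cinner y y)"
proof (cases "y = 0")
  case True then show ?thesis by simp
next
  case False
  define r where "r = Re (cinner y y)"
  have yy: "cinner y y = complex_of_real r" using hcinner_self_real r_def by simp
  have "r \<noteq> 0" using False yy cinner_self_eq_zero[of y] by auto
  hence rpos: "r > 0" using cinner_self_nonneg[of y] r_def by simp
  define w where "w = cinner x y"
  define t where "t = w / complex_of_real r"
  have yx: "cinner y x = cnj w" using cinner_sym w_def by metis
  have e: "cinner (x - t *\<^sub>C y) (x - t *\<^sub>C y) = cinner x x - cnj t * w - t * (cnj w - cnj t * complex_of_real r)"
    by (simp add: hcinner_diff_left hcinner_diff_right hcinner_scaleC_right cinner_scaleC_left yx yy w_def algebra_simps)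
  also have "\<dots> = cinner x x - w * cnj w / complex_of_real r"
    using rpos unfolding t_def by (simp add: field_simps)
  also have "\<dots> = cinner x x - complex_of_real (cmod w ^ 2 / r)"
    by (simp add: complex_norm_square[symmetric])
  finally have "0 \<le> Re (cinner x x) - cmod w ^ 2 / r"
    using cinner_self_nonneg[of "x - t *\<^sub>C y"] by simp
  hence "cmod w ^ 2 / r \<le> Re (cinner x x)" by simp
  hence "cmod w ^ 2 \<le> Re (cinner x x) * r" using rpos by (simp add: divide_le_eq)
  thus ?thesis unfolding w_def r_def .
qed

lemma hcnorm_nonneg: "0 \<le> cnorm (x::'h::chilbert)" using cinner_self_nonneg[of x] by (simp add: cnorm_def)

lemma hcnorm_triangle: "cnorm (x + y) \<le> cnorm x + cnorm (y::'h::chilbert)"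
proof -
  define X where "X = Re (cinner x x)"
  define Y where "Y = Re (cinner y y)"
  have X0: "X \<ge> 0" and Y0: "Y \<ge> 0" using cinner_self_nonneg X_def Y_def by auto
  have "Re (cinner (x+y) (x+y)) = X + Y + Re (cinner x y) + Re (cinner y x)"
    by (simp add: cinner_add_left hcinner_add_right X_def Y_def)
  also have "Re (cinner y x) = Re (cinner x y)" by (metis cinner_sym complex_cnj_cancel_iff cnj.simps(1))
  also have "Re (cinner x y) \<le> sqrt X * sqrt Y"
  proof -
    have "Re (cinner x y) \<le> cmod (cinner x y)" by (rule complex_Re_le_cmod)
    also have "\<dots> = sqrt (cmod (cinner x y) ^ 2)" by simp
    also have "\<dots> \<le> sqrt (X * Y)" using hcs[of x y] X_def Y_def real_sqrt_le_iff by blast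
    finally show ?thesis by (simp add: real_sqrt_mult)
  qed
  finally have "Re (cinner (x+y) (x+y)) \<le> (sqrt X + sqrt Y)^2"
    using X0 Y0 by (simp add: power2_eq_square algebra_simps)
  hence "sqrt (Re (cinner (x+y) (x+y))) \<le> sqrt ((sqrt X + sqrt Y)^2)" using real_sqrt_le_iff by blast
  thus ?thesis unfolding cnorm_def X_def[symmetric] Y_def[symmetric] using X0 Y0 by simp
qed

lemma hcnorm_minus: "cnorm (- x) = cnorm (x::'h::chilbert)"
  by (simp add: cnorm_def hcinner_minus_left hcinner_minus_right)

lemma hcnorm_diff: "cnorm (x - y) \<le> cnorm x + cnorm (y::'h::chilbert)"
  using hcnorm_triangle[of x "-y"] hcnorm_minus[of y] by simp


lemma hclinear_add: "clinear f \<Longrightarrow> f (x + y) = f x + f (y::'h::chilbert)"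
  by (simp add: clinear_def)
lemma hclinear_scale: "clinear f \<Longrightarrow> f (a *\<^sub>C x) = a *\<^sub>C f (x::'h::chilbert)"
  by (simp add: clinear_def)
lemma hclinear_diff: "clinear f \<Longrightarrow> f (x - y) = f x - f (y::'h::chilbert)"
  using hclinear_add[of f "x - y" y] by (simp add: eq_diff_eq)
lemma hclinear_zero: "clinear f \<Longrightarrow> f 0 = (0::'h::chilbert)"
  using hclinear_diff[of f 0 0] by simp

lemma hclinear_comp: "clinear f \<Longrightarrow> clinear g \<Longrightarrow> clinear (\<lambda>x::'h::chilbert. f (g x))"
  by (simp add: clinear_def)
lemma hclinear_sum: "clinear f \<Longrightarrow> clinear g \<Longrightarrow> clinear (\<lambda>x::'h::chilbert. f x + g x)"
  by (simp add: clinear_def scaleC_add_right algebra_simps)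
lemma hclinear_minus: "clinear f \<Longrightarrow> clinear g \<Longrightarrow> clinear (\<lambda>x::'h::chilbert. f x - g x)"
  by (simp add: clinear_def hscaleC_diff_right algebra_simps)
lemma hclinear_id: "clinear (\<lambda>x::'h::chilbert. x)"
  by (simp add: clinear_def)

definition hbnd :: "('h::chilbert \<Rightarrow> 'h) \<Rightarrow> bool" where
  "hbnd T \<longleftrightarrow> (\<exists>K\<ge>0. \<forall>x. cnorm (T x) \<le> K * cnorm x)"

lemma hbnd_Bop: "(T::'h::chilbert \<Rightarrow> 'h) \<in> Bop \<Longrightarrow> hbnd T"
proof -
  assume "T \<in> Bop"
  then obtain K where K: "\<forall>x. cnorm (T x) \<le> K * cnorm x" by (auto simp: Bop_def)
  have "\<forall>x. cnorm (T x) \<le> max K 0 * cnorm x"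
  proof
    fix x :: 'h
    have "K * cnorm x \<le> max K 0 * cnorm x" by (rule mult_right_mono) (auto simp: hcnorm_nonneg)
    thus "cnorm (T x) \<le> max K 0 * cnorm x" using K by (meson order_trans)
  qed
  thus ?thesis unfolding hbnd_def by (meson max.cobounded2)
qed

lemma hbnd_comp: "hbnd f \<Longrightarrow> hbnd g \<Longrightarrow> hbnd (\<lambda>x::'h::chilbert. f (g x))"
proof -
  assume "hbnd f" "hbnd g"
  then obtain K L where K: "K \<ge> 0" "\<forall>x. cnorm (f x) \<le> K * cnorm x"
    and L: "L \<ge> 0" "\<forall>x. cnorm (g x) \<le> L * cnorm x" unfolding hbnd_def by blast
  have "\<forall>x. cnorm (f (g x)) \<le> (K * L) * cnorm x"
  proof
    fix x
    have "cnorm (f (g x)) \<le> K * cnorm (g x)" using K by blast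
    also have "\<dots> \<le> K * (L * cnorm x)" using L K by (simp add: mult_left_mono)
    finally show "cnorm (f (g x)) \<le> (K * L) * cnorm x" by (simp add: mult.assoc)
  qed
  thus ?thesis unfolding hbnd_def using K L by (meson mult_nonneg_nonneg)
qed

lemma hbnd_sum: "hbnd f \<Longrightarrow> hbnd g \<Longrightarrow> hbnd (\<lambda>x::'h::chilbert. f x + g x)"
proof -
  assume "hbnd f" "hbnd g"
  then obtain K L where K: "K \<ge> 0" "\<forall>x. cnorm (f x) \<le> K * cnorm x"
    and L: "L \<ge> 0" "\<forall>x. cnorm (g x) \<le> L * cnorm x" unfolding hbnd_def by blast
  have "\<forall>x. cnorm (f x + g x) \<le> (K + L) * cnorm x"
  proof
    fix x
    have "cnorm (f x + g x) \<le> cnorm (f x) + cnorm (g x)" by (rule hcnorm_triangle)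
    also have "\<dots> \<le> K * cnorm x + L * cnorm x" using K L by (meson add_mono)
    finally show "cnorm (f x + g x) \<le> (K + L) * cnorm x" by (simp add: distrib_right)
  qed
  thus ?thesis unfolding hbnd_def using K L by (meson add_nonneg_nonneg)
qed

lemma hbnd_minus: "hbnd f \<Longrightarrow> hbnd g \<Longrightarrow> hbnd (\<lambda>x::'h::chilbert. f x - g x)"
proof -
  assume "hbnd f" "hbnd g"
  then obtain K L where K: "K \<ge> 0" "\<forall>x. cnorm (f x) \<le> K * cnorm x"
    and L: "L \<ge> 0" "\<forall>x. cnorm (g x) \<le> L * cnorm x" unfolding hbnd_def by blast
  have "\<forall>x. cnorm (f x - g x) \<le> (K + L) * cnorm x"
  proof
    fix x
    have "cnorm (f x - g x) \<le> cnorm (f x) + cnorm (g x)" by (rule hcnorm_diff)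
    also have "\<dots> \<le> K * cnorm x + L * cnorm x" using K L by (meson add_mono)
    finally show "cnorm (f x - g x) \<le> (K + L) * cnorm x" by (simp add: distrib_right)
  qed
  thus ?thesis unfolding hbnd_def using K L by (meson add_nonneg_nonneg)
qed

lemma hbnd_id: "hbnd (\<lambda>x::'h::chilbert. x)"
  unfolding hbnd_def by (rule exI[of _ 1]) simp

lemma hBop_intro: "clinear T \<Longrightarrow> hbnd T \<Longrightarrow> T \<in> Bop"
  unfolding Bop_def hbnd_def by blast

lemma hBop_clinear: "T \<in> Bop \<Longrightarrow> clinear T"
  unfolding Bop_def by blast

lemma hadj_unique: "is_adjoint (c::'h::chilbert \<Rightarrow> 'h) S1 \<Longrightarrow> is_adjoint c S2 \<Longrightarrow> S1 = S2"
proof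
  fix y
  assume A: "is_adjoint c S1" "is_adjoint c S2"
  have "\<forall>x. cinner x (S1 y - S2 y) = 0"
    using A by (simp add: is_adjoint_def hcinner_diff_right)
  hence "S1 y - S2 y = 0" using cinner_self_eq_zero by blast
  thus "S1 y = S2 y" by simp
qed

lemma hadj_eq: "is_adjoint (c::'h::chilbert \<Rightarrow> 'h) S \<Longrightarrow> adj c = S"
  unfolding adj_def using hadj_unique by blast


theorem lemma5p1:
  fixes V :: "('h::chilbert \<Rightarrow> 'h) set" and p q a b c :: "'h \<Rightarrow> 'h"
  assumes "operator_system V"
    and "p \<in> V" and "projection p"
    and "q = (\<lambda>x. x - p x)"
    and "a \<in> V" and "b \<in> V" and "c \<in> V"
    and "selfadj a" and "selfadj b"
  shows "pos_op (\<lambda>x. p (a (p x)) + p (c (q x)) + q (adj c (p x)) + q (b (q x)))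
     \<longleftrightarrow> mat2 a c (adj c) b \<in> Ccone V p q"
proof -
  note os = assms(1)[unfolded operator_system_def]
  have VB: "V \<subseteq> Bop" using os by blast
  obtain S where SV: "S \<in> V" and Sadj: "is_adjoint c S" using os assms(7) by blast
  have adjc: "adj c = S" using Sadj by (rule hadj_eq)
  have pB: "p \<in> Bop" and aB: "a \<in> Bop" and bB: "b \<in> Bop" and cB: "c \<in> Bop" and SB: "S \<in> Bop"
    using VB assms SV by auto
  have lp: "clinear p" and la: "clinear a" and lb: "clinear b" and lc: "clinear c" and lS: "clinear S"
    using pB aB bB cB SB hBop_clinear by auto
  have lq: "clinear q" unfolding assms(4) by (intro hclinear_minus hclinear_id lp)
  have bp: "hbnd p" and ba: "hbnd a" and bb: "hbnd b" and bc: "hbnd c" and bS: "hbnd S"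
    using pB aB bB cB SB hbnd_Bop by auto
  have bq: "hbnd q" unfolding assms(4) by (intro hbnd_minus hbnd_id bp)
  define T where "T = (\<lambda>x. p (a (p x)) + p (c (q x)) + q (S (p x)) + q (b (q x)))"
  have TB: "T \<in> Bop" unfolding T_def
    apply (rule hBop_intro)
     apply (rule hclinear_sum[OF hclinear_sum[OF hclinear_sum]])
        apply (rule hclinear_comp[OF lp hclinear_comp[OF la lp]])
       apply (rule hclinear_comp[OF lp hclinear_comp[OF lc lq]])
      apply (rule hclinear_comp[OF lq hclinear_comp[OF lS lp]])
     apply (rule hclinear_comp[OF lq hclinear_comp[OF lb lq]])
    apply (rule hbnd_sum[OF hbnd_sum[OF hbnd_sum]])
       apply (rule hbnd_comp[OF bp hbnd_comp[OF ba bp]])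
      apply (rule hbnd_comp[OF bp hbnd_comp[OF bc bq]])
     apply (rule hbnd_comp[OF bq hbnd_comp[OF bS bp]])
    apply (rule hbnd_comp[OF bq hbnd_comp[OF bb bq]])
    done
  have pidem: "\<And>x. p (p x) = p x" using assms(3) by (simp add: projection_def)
  have psa: "\<And>x y. cinner (p x) y = cinner x (p y)" using assms(3) by (simp add: projection_def selfadj_def is_adjoint_def)
  have qdef: "\<And>x. q x = x - p x" using assms(4) by simp
  have pq: "\<And>y. p (q y) = 0" using pidem by (simp add: qdef hclinear_diff[OF lp])
  have qp: "\<And>y. q (p y) = 0" using pidem by (simp add: qdef)
  have qidem: "\<And>x. q (q x) = q x" using pq by (simp add: qdef)
  have key1: "\<And>w x y. cinner (p w) x = cinner (p w) (p x + q y)"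
  proof -
    fix w x y
    have "cinner (p w) (q y) = cinner (p (p w)) (q y)" by (simp add: pidem)
    also have "\<dots> = 0" by (simp add: psa pq)
    finally have "cinner (p w) (q y) = 0" .
    moreover have "cinner (p w) x = cinner (p w) (p x)" by (metis pidem psa)
    ultimately show "cinner (p w) x = cinner (p w) (p x + q y)" by (simp add: hcinner_add_right)
  qed
  have qsa: "\<And>x y. cinner (q x) y = cinner x (q y)"
    by (simp add: qdef hcinner_diff_left hcinner_diff_right psa)
  have key2: "\<And>w x y. cinner (q w) y = cinner (q w) (p x + q y)"
  proof -
    fix w x y
    have "cinner (q w) (p x) = cinner (q (q w)) (p x)" by (simp add: qidem)
    also have "\<dots> = 0" by (simp add: qsa qp)
    finally have "cinner (q w) (p x) = 0" .
    moreover have "cinner (q w) y = cinner (q w) (q y)" by (metis qidem qsa)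
    ultimately show "cinner (q w) y = cinner (q w) (p x + q y)" by (simp add: hcinner_add_right)
  qed
  have pz: "\<And>x y. p (p x + q y) = p x" by (simp add: hclinear_add[OF lp] pidem pq)
  have qz: "\<And>x y. q (p x + q y) = q y" by (simp add: hclinear_add[OF lq] qidem qp)
  define F where "F u = cinner2 ((diag2 p q \<circ> mat2 a c S b \<circ> diag2 p q) u) u" for u
  have Fxy: "F (x, y) = cinner (T (p x + q y)) (p x + q y)" for x y
  proof -
    have "F (x, y) = cinner (p (a (p x) + c (q y))) x + cinner (q (S (p x) + b (q y))) y"
      by (simp add: F_def diag2_def mat2_def cinner2_def)
    also have "\<dots> = cinner (p (a (p x) + c (q y))) (p x + q y) + cinner (q (S (p x) + b (q y))) (p x + q y)"
      using key1[of "a (p x) + c (q y)" x y] key2[of "S (p x) + b (q y)" y x] by simp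
    also have "\<dots> = cinner (T (p x + q y)) (p x + q y)"
      by (simp add: T_def pz qz pidem pq qp qidem hclinear_add[OF lp] hclinear_add[OF lq] cinner_add_left add.assoc)
    finally show ?thesis .
  qed
  have Fzz: "F (z, z) = cinner (T z) z" for z
    by (simp add: F_def diag2_def mat2_def cinner2_def T_def hclinear_add[OF lp] hclinear_add[OF lq] cinner_add_left add.assoc)
  have M2: "mat2 a c S b \<in> M2 V" unfolding M2_def using assms SV by blast
  have aadj: "\<And>x y. cinner (a x) y = cinner x (a y)" using assms(8) by (simp add: selfadj_def is_adjoint_def)
  have badj: "\<And>x y. cinner (b x) y = cinner x (b y)" using assms(9) by (simp add: selfadj_def is_adjoint_def)
  have cadj: "\<And>x y. cinner (c x) y = cinner x (S y)" using Sadj by (simp add: is_adjoint_def)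
  have Sadj2: "cinner (S x) y = cinner x (c y)" for x y
  proof -
    have "cinner (S x) y = cnj (cinner y (S x))" by (rule cinner_sym)
    also have "\<dots> = cnj (cinner (c y) x)" by (simp add: cadj)
    also have "\<dots> = cinner x (c y)" by (rule cinner_sym[symmetric])
    finally show ?thesis .
  qed
  have SA: "selfadj2 (mat2 a c S b)"
    unfolding selfadj2_def
  proof (intro allI)
    fix u v :: "'h \<times> 'h"
    obtain x y where u: "u = (x, y)" by fastforce
    obtain s t where v: "v = (s, t)" by fastforce
    show "cinner2 (mat2 a c S b u) v = cinner2 u (mat2 a c S b v)"
      by (simp add: u v mat2_def cinner2_def cinner_add_left hcinner_add_right aadj badj cadj Sadj2)
  qed
  have "pos_op T \<longleftrightarrow> pos_op2 (diag2 p q \<circ> mat2 a c S b \<circ> diag2 p q)"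
  proof
    assume P: "pos_op T"
    show "pos_op2 (diag2 p q \<circ> mat2 a c S b \<circ> diag2 p q)"
      unfolding pos_op2_def
    proof
      fix u :: "'h \<times> 'h"
      obtain x y where u: "u = (x, y)" by fastforce
      show "Im (cinner2 ((diag2 p q \<circ> mat2 a c S b \<circ> diag2 p q) u) u) = 0 \<and>
            0 \<le> Re (cinner2 ((diag2 p q \<circ> mat2 a c S b \<circ> diag2 p q) u) u)"
        using P Fxy[of x y] unfolding F_def u pos_op_def by simp
    qed
  next
    assume P: "pos_op2 (diag2 p q \<circ> mat2 a c S b \<circ> diag2 p q)"
    show "pos_op T" unfolding pos_op_def
      using TB P Fzz unfolding F_def pos_op2_def by metis
  qed
  thus ?thesis using M2 SA unfolding Ccone_def adjc T_def by blast
qed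

end
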